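(* There exists a finite graph $G$ which is $P_{6}$-induced-saturated.
   Context: $P_n$ denotes the path on $n$ vertices. A (simple) graph $G$ is called $H$-induced-saturated if (i) $G$ does not contain an induced subgraph isomorphic to $H$; (ii) for every edge $e\in E(G)$, the graph $G-e$ obtained by deleting $e$ contains an induced subgraph isomorphic to $H$; and (iii) for every pair $\{x,y\}$ of distinct non-adjacent vertices of $G$, the graph $G+xy$ obtained by adding the edge $xy$ contains an induced subgraph isomorphic to $H$. *)

theory Defs
  imports Main
begin

definition simple_graph :: "'a set \<Rightarrow> 'a set set \<Rightarrow> bool" where
  "simple_graph V Es \<longleftrightarrow> finite V \<and> (\<forall>e\<in>Es. e \<subseteq> V \<and> card e = 2)"

definition has_induced_path :: "nat \<Rightarrow> 'a set \<Rightarrow> 'a set set \<Rightarrow> bool" where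
  "has_induced_path n V Es \<longleftrightarrow>
     (\<exists>xs. length xs = n \<and> distinct xs \<and> set xs \<subseteq> V \<and>
        (\<forall>i<n. \<forall>j<n. {xs ! i, xs ! j} \<in> Es \<longleftrightarrow> (i = Suc j \<or> j = Suc i)))"

definition induced_path_saturated :: "nat \<Rightarrow> 'a set \<Rightarrow> 'a set set \<Rightarrow> bool" where
  "induced_path_saturated n V Es \<longleftrightarrow>
     \<not> has_induced_path n V Es \<and>
     (\<forall>e\<in>Es. has_induced_path n V (Es - {e})) \<and>
     (\<forall>x\<in>V. \<forall>y\<in>V. x \<noteq> y \<and> {x, y} \<notin> Es \<longrightarrow> has_induced_path n V (insert {x, y} Es))"

end

theory Submission
  imports Defs
begin

definition nbrs :: "nat \<Rightarrow> nat list" where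
  "nbrs u = [[3, 4, 6, 8, 9], [2, 5, 7, 9, 8], [1, 6, 4, 10, 11], [0, 7, 5, 11, 10], [7, 0, 2, 12, 13], [6, 1, 3, 13, 12], [5, 2, 0, 14, 15], [4, 3, 1, 15, 14], [11, 12, 14, 0, 1], [10, 13, 15, 1, 0], [9, 14, 12, 2, 3], [8, 15, 13, 3, 2], [15, 8, 10, 4, 5], [14, 9, 11, 5, 4], [13, 10, 8, 6, 7], [12, 11, 9, 7, 6]] ! u"

definition adjb :: "nat \<Rightarrow> nat \<Rightarrow> bool" where
  "adjb u v = (v \<in> set (nbrs u))"

definition GV :: "nat set" where "GV = {0..<16}"

definition GE :: "nat set set" where
  "GE = {{a, b} | a b. a < 16 \<and> b < 16 \<and> adjb a b}"

fun ext :: "nat \<Rightarrow> nat list \<Rightarrow> bool" where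
  "ext 0 p = False"
| "ext (Suc k) p = (\<forall>v\<in>set (nbrs (hd p)). v \<notin> set p \<and> (\<forall>u\<in>set (tl p). \<not> adjb v u) \<longrightarrow> ext k (v # p))"

lemma ext_check: "ext 5 [0]" by code_simp

lemma fin_sym: "\<forall>a\<in>set [0..<16]. \<forall>b\<in>set [0..<16]. adjb a b = adjb b a" by code_simp
lemma fin_irr: "\<forall>a\<in>set [0..<16]. \<not> adjb a a" by code_simp
lemma fin_aut: "\<forall>a\<in>set [0..<16]. \<forall>u\<in>set [0..<16]. \<forall>v\<in>set [0..<16]. adjb (xor a u) (xor a v) = adjb u v" by code_simp
lemma fin_lt: "\<forall>a\<in>set [0..<16]. \<forall>u\<in>set [0..<16]. xor a u < (16::nat)" by code_simp
lemma fin_inv: "\<forall>a\<in>set [0..<16]. \<forall>u\<in>set [0..<16]. xor a (xor a u) = (u::nat)" by code_simp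
lemma fin_self: "\<forall>a\<in>set [0..<16]. xor a a = (0::nat)" by code_simp

definition WT :: "nat list list list" where
  "WT = [[[],[0,1,2,10,12,15],[0,2,1,5,12,15],[0,4,2,1,5,3],[0,3,5,1,2,4],[0,5,1,2,10,14],[0,3,7,1,2,6],[0,7,1,2,10,12],[0,3,5,1,8,14],[0,3,5,1,9,15],[0,10,2,1,5,13],[0,11,2,1,5,12],[0,12,5,1,2,11],[0,13,5,1,2,10],[0,14,7,1,2,11],[0,15,7,1,2,10]],[[0,1,2,10,12,15],[],[1,5,3,0,4,2],[1,3,0,4,12,15],[1,4,0,3,10,14],[1,2,4,0,3,5],[1,6,0,3,10,12],[1,2,6,0,3,7],[0,8,11,2,1,5],[0,9,10,2,1,5],[0,4,13,5,1,10],[0,4,12,5,1,11],[0,3,11,2,1,12],[0,3,10,2,1,13],[0,3,11,2,1,14],[0,3,10,2,1,15]],[[0,2,1,5,12,15],[1,5,3,0,4,2],[],[2,3,0,8,12,15],[0,4,7,1,2,10],[0,8,14,10,2,5],[0,6,5,1,2,10],[0,8,12,10,2,7],[2,8,0,3,5,13],[2,9,0,3,5,12],[1,2,4,0,3,10],[1,2,4,0,3,11],[0,3,7,1,2,12],[0,3,7,1,2,13],[0,3,5,1,2,14],[0,3,5,1,2,15]],[[0,4,2,1,5,3],[1,3,0,4,12,15],[2,3,0,8,12,15],[],[1,8,14,10,3,4],[0,3,7,1,5,12],[1,8,12,10,3,6],[0,3,5,1,7,14],[2,4,13,5,3,8],[2,4,12,5,3,9],[0,3,5,1,2,10],[0,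3,5,1,2,11],[1,2,6,0,3,12],[1,2,6,0,3,13],[1,2,4,0,3,14],[1,2,4,0,3,15]],[[0,3,5,1,2,4],[1,4,0,3,10,14],[0,4,7,1,2,10],[1,8,14,10,3,4],[],[4,5,1,8,11,15],[1,8,11,13,4,6],[0,4,2,1,7,14],[3,5,6,2,4,8],[3,5,6,2,4,9],[1,5,6,0,4,10],[1,5,6,0,4,11],[0,4,2,1,5,12],[0,4,2,1,5,13],[1,5,3,0,4,14],[1,5,3,0,4,15]],[[0,5,1,2,10,14],[1,2,4,0,3,5],[0,8,14,10,2,5],[0,3,7,1,5,12],[4,5,1,8,11,15],[],[0,6,2,1,5,12],[0,8,11,13,5,7],[2,4,7,3,5,8],[2,4,7,3,5,9],[0,4,7,1,5,10],[0,4,7,1,5,11],[1,5,3,0,4,12],[1,5,3,0,4,13],[0,4,2,1,5,14],[0,4,2,1,5,15]],[[0,3,7,1,2,6],[1,6,0,3,10,12],[0,6,5,1,2,10],[1,8,12,10,3,6],[1,8,11,13,4,6],[0,6,2,1,5,12],[],[6,7,1,8,11,13],[3,7,4,2,6,8],[3,7,4,2,6,9],[1,7,4,0,6,10],[1,7,4,0,6,11],[1,7,3,0,6,12],[1,7,3,0,6,13],[0,6,2,1,7,14],[0,6,2,1,7,15]],[[0,7,1,2,10,12],[1,2,6,0,3,7],[0,8,12,10,2,7],[0,3,5,1,7,14],[0,4,2,1,7,14],[0,8,11,13,5,7],[6,7,1,8,11,13],[],[2,6,5,3,7,8],[2,6,5,3,7,9],[0,6,5,1,7,10],[0,6,5,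1,7,11],[0,6,2,1,7,12],[0,6,2,1,7,13],[1,7,3,0,6,14],[1,7,3,0,6,15]],[[0,3,5,1,8,14],[0,8,11,2,1,5],[2,8,0,3,5,13],[2,4,13,5,3,8],[3,5,6,2,4,8],[2,4,7,3,5,8],[3,7,4,2,6,8],[2,6,5,3,7,8],[],[2,4,7,14,8,9],[4,7,15,9,10,8],[0,8,1,2,11,13],[0,8,1,2,10,12],[2,6,15,9,13,8],[0,8,1,2,10,14],[2,4,13,9,15,8]],[[0,3,5,1,9,15],[0,9,10,2,1,5],[2,9,0,3,5,12],[2,4,12,5,3,9],[3,5,6,2,4,9],[2,4,7,3,5,9],[3,7,4,2,6,9],[2,6,5,3,7,9],[2,4,7,14,8,9],[],[0,9,1,2,10,12],[4,7,14,8,11,9],[2,6,14,8,12,9],[0,9,1,2,11,13],[2,4,12,8,14,9],[0,9,1,2,11,15]],[[0,10,2,1,5,13],[0,4,13,5,1,10],[1,2,4,0,3,10],[0,3,5,1,2,10],[1,5,6,0,4,10],[0,4,7,1,5,10],[1,7,4,0,6,10],[0,6,5,1,7,10],[4,7,15,9,10,8],[0,9,1,2,10,12],[],[0,4,7,14,10,11],[2,10,3,0,8,12],[0,6,15,11,13,10],[2,10,3,0,8,14],[0,4,13,11,15,10]],[[0,11,2,1,5,12],[0,4,12,5,1,11],[1,2,4,0,3,11],[0,3,5,1,2,11],[1,5,6,0,4,11],[0,4,7,1,5,11],[1,7,4,0,6,11],[0,6,5,1,7,11],[0,8,1,2,11,13],[4,7,14,8,11,9],[0,4,7,14,10,11]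,[],[0,6,14,10,12,11],[2,11,3,0,9,13],[0,4,12,10,14,11],[2,11,3,0,9,15]],[[0,12,5,1,2,11],[0,3,11,2,1,12],[0,3,7,1,2,12],[1,2,6,0,3,12],[0,4,2,1,5,12],[1,5,3,0,4,12],[1,7,3,0,6,12],[0,6,2,1,7,12],[0,8,1,2,10,12],[2,6,14,8,12,9],[2,10,3,0,8,12],[0,6,14,10,12,11],[],[0,3,7,14,13,12],[0,3,11,13,14,12],[4,12,5,1,9,15]],[[0,13,5,1,2,10],[0,3,10,2,1,13],[0,3,7,1,2,13],[1,2,6,0,3,13],[0,4,2,1,5,13],[1,5,3,0,4,13],[1,7,3,0,6,13],[0,6,2,1,7,13],[2,6,15,9,13,8],[0,9,1,2,11,13],[0,6,15,11,13,10],[2,11,3,0,9,13],[0,3,7,14,13,12],[],[4,13,5,1,8,14],[0,3,10,12,15,13]],[[0,14,7,1,2,11],[0,3,11,2,1,14],[0,3,5,1,2,14],[1,2,4,0,3,14],[1,5,3,0,4,14],[0,4,2,1,5,14],[0,6,2,1,7,14],[1,7,3,0,6,14],[0,8,1,2,10,14],[2,4,12,8,14,9],[2,10,3,0,8,14],[0,4,12,10,14,11],[0,3,11,13,14,12],[4,13,5,1,8,14],[],[0,3,5,12,15,14]],[[0,15,7,1,2,10],[0,3,10,2,1,15],[0,3,5,1,2,15],[1,2,4,0,3,15],[1,5,3,0,4,15],[0,4,2,1,5,15],[0,6,2,1,7,15],[1,7,3,0,6,15],[2,4,13,9,15,8],[0,9,1,2,11,15],[0,4,13,11,15,10],[2,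11,3,0,9,15],[4,12,5,1,9,15],[0,3,10,12,15,13],[0,3,5,12,15,14],[]]]"

definition W :: "nat \<Rightarrow> nat \<Rightarrow> nat list" where
  "W a b = WT ! a ! b"

definition chk :: "(nat \<Rightarrow> nat \<Rightarrow> bool) \<Rightarrow> nat list \<Rightarrow> bool" where
  "chk R xs = (length xs = 6 \<and> distinct xs \<and> (\<forall>x\<in>set xs. x < 16) \<and>
     (\<forall>i\<in>set [0..<6]. \<forall>j\<in>set [0..<6]. R (xs ! i) (xs ! j) = (i = Suc j \<or> j = Suc i)))"

definition Rdel :: "nat \<Rightarrow> nat \<Rightarrow> nat \<Rightarrow> nat \<Rightarrow> bool" where
  "Rdel a b x y = (adjb x y \<and> \<not> ((x = a \<and> y = b) \<or> (x = b \<and> y = a)))"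

definition Radd :: "nat \<Rightarrow> nat \<Rightarrow> nat \<Rightarrow> nat \<Rightarrow> bool" where
  "Radd a b x y = (adjb x y \<or> (x = a \<and> y = b) \<or> (x = b \<and> y = a))"

lemma fin_del: "\<forall>a\<in>set [0..<16]. \<forall>b\<in>set [0..<16]. adjb a b \<longrightarrow> chk (Rdel a b) (W a b)"
  by code_simp

lemma fin_add: "\<forall>a\<in>set [0..<16]. \<forall>b\<in>set [0..<16]. a \<noteq> b \<and> \<not> adjb a b \<longrightarrow> chk (Radd a b) (W a b)"
  by code_simp

lemma set16: "set [0..<16] = {0..<(16::nat)}" by simp

lemma in16: "a < 16 \<Longrightarrow> a \<in> set [0..<(16::nat)]" by simp

lemma sym16: "a < 16 \<Longrightarrow> b < 16 \<Longrightarrow> adjb a b = adjb b a"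
  using fin_sym in16 by blast

lemma irr16: "a < 16 \<Longrightarrow> \<not> adjb a a"
  using fin_irr in16 by blast

lemma aut16: "a < 16 \<Longrightarrow> u < 16 \<Longrightarrow> v < 16 \<Longrightarrow> adjb (xor a u) (xor a v) = adjb u v"
  using fin_aut in16 by blast

lemma inv16: "a < 16 \<Longrightarrow> u < 16 \<Longrightarrow> xor a (xor a u) = (u::nat)"
  using fin_inv in16 by blast

lemma self16: "a < 16 \<Longrightarrow> xor a a = (0::nat)"
  using fin_self in16 by blast

lemma del16: "a < 16 \<Longrightarrow> b < 16 \<Longrightarrow> adjb a b \<Longrightarrow> chk (Rdel a b) (W a b)"
  using fin_del in16 by blast

lemma add16: "a < 16 \<Longrightarrow> b < 16 \<Longrightarrow> a \<noteq> b \<Longrightarrow> \<not> adjb a b \<Longrightarrow> chk (Radd a b) (W a b)"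
  using fin_add in16 by blast

lemma memGE: "{x, y} \<in> GE \<longleftrightarrow> x < 16 \<and> y < 16 \<and> adjb x y"
proof
  assume "{x, y} \<in> GE"
  then obtain a b where ab: "{x, y} = {a, b}" "a < 16" "b < 16" "adjb a b"
    by (auto simp: GE_def)
  from ab(1) have "(x = a \<and> y = b) \<or> (x = b \<and> y = a)" by (simp add: doubleton_eq_iff)
  then show "x < 16 \<and> y < 16 \<and> adjb x y" using ab sym16 by metis
next
  assume "x < 16 \<and> y < 16 \<and> adjb x y"
  then show "{x, y} \<in> GE" by (auto simp: GE_def)
qed

lemma ext_sound:
  assumes len: "length ys = 6" and dis: "distinct ys"
    and P: "\<forall>i<6. \<forall>j<6. adjb (ys!i) (ys!j) = (i = Suc j \<or> j = Suc i)"
  shows "k + m = 6 \<Longrightarrow> 1 \<le> m \<Longrightarrow> \<not> ext k (rev (take m ys))"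
proof (induction k arbitrary: m)
  case 0
  show ?case by simp
next
  case (Suc k)
  hence m: "m < 6" "1 \<le> m" by auto
  then obtain m' where m': "m = Suc m'" by (cases m) auto
  have eq: "rev (take m ys) = ys ! m' # rev (take m' ys)"
    using m m' len by (simp add: take_Suc_conv_app_nth)
  define v where "v = ys ! m"
  have "adjb (ys ! m') (ys ! m)" using P m m' by auto
  hence v_nb: "v \<in> set (nbrs (ys ! m'))" by (simp add: adjb_def v_def)
  have v_notin: "v \<notin> set (rev (take m ys))"
  proof
    assume "v \<in> set (rev (take m ys))"
    then obtain i where i: "i < length (take m ys)" "take m ys ! i = v"
      by (auto simp: in_set_conv_nth)
    hence "ys ! i = ys ! m" "i < m" using m len by (auto simp: v_def)
    thus False using dis m len nth_eq_iff_index_eq by fastforce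
  qed
  have nonadj: "\<forall>u\<in>set (tl (rev (take m ys))). \<not> adjb v u"
  proof
    fix u assume "u \<in> set (tl (rev (take m ys)))"
    hence "u \<in> set (take m' ys)" using eq by simp
    then obtain i where i: "i < length (take m' ys)" "take m' ys ! i = u"
      by (auto simp: in_set_conv_nth)
    hence "u = ys ! i" "i < m'" using m m' len by auto
    thus "\<not> adjb v u" using P m m' by (auto simp: v_def)
  qed
  have nxt: "v # rev (take m ys) = rev (take (Suc m) ys)"
    using m len by (simp add: take_Suc_conv_app_nth v_def)
  have nk: "\<not> ext k (v # rev (take m ys))" using Suc.IH[of "Suc m"] Suc.prems nxt by simp
  have hd: "hd (rev (take m ys)) = ys ! m'" using eq by simp
  show ?case
  proof
    assume "ext (Suc k) (rev (take m ys))"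
    hence "\<forall>w\<in>set (nbrs (hd (rev (take m ys)))). w \<notin> set (rev (take m ys)) \<and> (\<forall>u\<in>set (tl (rev (take m ys))). \<not> adjb w u) \<longrightarrow> ext k (w # rev (take m ys))"
      by (simp only: ext.simps)
    hence "\<forall>w\<in>set (nbrs (ys ! m')). w \<notin> set (rev (take m ys)) \<and> (\<forall>u\<in>set (tl (rev (take m ys))). \<not> adjb w u) \<longrightarrow> ext k (w # rev (take m ys))"
      by (simp only: hd)
    hence "ext k (v # rev (take m ys))" using v_nb v_notin nonadj by blast
    thus False using nk by contradiction
  qed
qed

lemma chk_path:
  assumes c: "chk R xs" and m: "\<And>x y. x < 16 \<Longrightarrow> y < 16 \<Longrightarrow> ({x, y} \<in> E \<longleftrightarrow> R x y)"
  shows "has_induced_path 6 GV E"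
proof -
  have l: "length xs = 6" and d: "distinct xs" and b: "\<forall>x\<in>set xs. x < 16"
    and p: "\<forall>i\<in>set [0..<6]. \<forall>j\<in>set [0..<6]. R (xs ! i) (xs ! j) = (i = Suc j \<or> j = Suc i)"
    using c by (auto simp: chk_def)
  have "set xs \<subseteq> GV" using b by (auto simp: GV_def)
  moreover have "\<forall>i<6. \<forall>j<6. {xs ! i, xs ! j} \<in> E \<longleftrightarrow> (i = Suc j \<or> j = Suc i)"
  proof (intro allI impI)
    fix i j :: nat assume ij: "i < 6" "j < 6"
    hence "xs ! i < 16" "xs ! j < 16" using b l by auto
    thus "{xs ! i, xs ! j} \<in> E \<longleftrightarrow> (i = Suc j \<or> j = Suc i)" using m p ij by auto
  qed
  ultimately have "length xs = 6 \<and> distinct xs \<and> set xs \<subseteq> GV \<and>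
        (\<forall>i<6. \<forall>j<6. {xs ! i, xs ! j} \<in> E \<longleftrightarrow> (i = Suc j \<or> j = Suc i))"
    using l d by (intro conjI)
  hence "\<exists>xs. length xs = 6 \<and> distinct xs \<and> set xs \<subseteq> GV \<and>
        (\<forall>i<6. \<forall>j<6. {xs ! i, xs ! j} \<in> E \<longleftrightarrow> (i = Suc j \<or> j = Suc i))"
    by (rule exI)
  thus ?thesis by (simp only: has_induced_path_def)
qed

theorem theorem1:
  shows "\<exists>(V :: nat set) Es. simple_graph V Es \<and> 2 \<le> card V \<and> induced_path_saturated 6 V Es"
proof (intro exI conjI)
  show "simple_graph GV GE"
  proof -
    have "\<forall>e\<in>GE. e \<subseteq> GV \<and> card e = 2"
    proof
      fix e assume "e \<in> GE"
      then obtain a b where ab: "e = {a, b}" "a < 16" "b < 16" "adjb a b" by (auto simp: GE_def)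
      hence "a \<noteq> b" using irr16 by blast
      thus "e \<subseteq> GV \<and> card e = 2" using ab by (auto simp: GV_def)
    qed
    thus ?thesis by (simp add: simple_graph_def GV_def)
  qed
  show "2 \<le> card GV" by (simp add: GV_def)
  show "induced_path_saturated 6 GV GE"
    unfolding induced_path_saturated_def
  proof (intro conjI ballI impI allI)
    show "\<not> has_induced_path 6 GV GE"
    proof
      assume "has_induced_path 6 GV GE"
      hence "\<exists>xs. length xs = 6 \<and> distinct xs \<and> set xs \<subseteq> GV \<and>
        (\<forall>i<6. \<forall>j<6. {xs ! i, xs ! j} \<in> GE \<longleftrightarrow> (i = Suc j \<or> j = Suc i))"
        by (simp only: has_induced_path_def)
      then obtain xs where H: "length xs = 6 \<and> distinct xs \<and> set xs \<subseteq> GV \<and>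
        (\<forall>i<6. \<forall>j<6. {xs ! i, xs ! j} \<in> GE \<longleftrightarrow> (i = Suc j \<or> j = Suc i))"
        by (rule exE)
      have l: "length xs = 6" using H by (rule conjunct1)
      have d: "distinct xs" using H by (rule conjunct1[OF conjunct2])
      have s: "set xs \<subseteq> GV" using H by (rule conjunct1[OF conjunct2[OF conjunct2]])
      have p: "\<forall>i<6. \<forall>j<6. {xs ! i, xs ! j} \<in> GE \<longleftrightarrow> (i = Suc j \<or> j = Suc i)"
        using H by (rule conjunct2[OF conjunct2[OF conjunct2]])
      have b: "xs ! i < 16" if i6: "i < 6" for i
      proof -
        have "xs ! i \<in> set xs" using l i6 by simp
        hence "xs ! i \<in> GV" using s by blast
        thus "xs ! i < 16" by (simp add: GV_def)
      qed
      define a where "a = xs ! 0"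
      have a16: "a < 16" using b by (simp add: a_def)
      define ys where "ys = map (xor a) xs"
      have ly: "length ys = 6" using l by (simp add: ys_def)
      have ysn: "\<And>i. i < 6 \<Longrightarrow> ys ! i = xor a (xs ! i)" using l by (simp add: ys_def)
      have inj: "inj_on (xor a) (set xs)"
      proof (rule inj_onI)
        fix u v assume uv: "u \<in> set xs" "v \<in> set xs" "xor a u = xor a v"
        have "u < 16" "v < 16" using uv s by (auto simp: GV_def)
        hence "xor a (xor a u) = u" "xor a (xor a v) = v" using inv16 a16 by auto
        thus "u = v" using uv(3) by metis
      qed
      have dy: "distinct ys" using d inj by (simp add: ys_def distinct_map)
      have py: "\<forall>i<6. \<forall>j<6. adjb (ys!i) (ys!j) = (i = Suc j \<or> j = Suc i)"
      proof (intro allI impI)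
        fix i j :: nat assume ij: "i < 6" "j < 6"
        have "adjb (ys!i) (ys!j) = adjb (xs!i) (xs!j)"
          using aut16[OF a16 b[OF ij(1)] b[OF ij(2)]] ysn ij by simp
        also have "\<dots> = (i = Suc j \<or> j = Suc i)" using p ij memGE b by auto
        finally show "adjb (ys!i) (ys!j) = (i = Suc j \<or> j = Suc i)" .
      qed
      have y0: "ys ! 0 = 0" using ysn[of 0] self16[OF a16] by (simp add: a_def)
      have "rev (take 1 ys) = [0]" using ly y0 by (cases ys) auto
      hence "\<not> ext 5 [0]" using ext_sound[OF ly dy py, of 5 1] by simp
      thus False using ext_check by simp
    qed
  next
    fix e assume "e \<in> GE"
    then obtain a b where ab: "e = {a, b}" "a < 16" "b < 16" "adjb a b" by (auto simp: GE_def)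
    have c: "chk (Rdel a b) (W a b)" using del16 ab by blast
    show "has_induced_path 6 GV (GE - {e})"
    proof (rule chk_path[OF c])
      fix x y :: nat assume "x < 16" "y < 16"
      thus "{x, y} \<in> GE - {e} \<longleftrightarrow> Rdel a b x y"
        using ab by (auto simp: memGE Rdel_def doubleton_eq_iff)
    qed
  next
    fix x y assume xy: "x \<in> GV" "y \<in> GV" and ne: "x \<noteq> y \<and> {x, y} \<notin> GE"
    have x16: "x < 16" "y < 16" using xy by (auto simp: GV_def)
    hence "\<not> adjb x y" using ne memGE by auto
    hence c: "chk (Radd x y) (W x y)" using add16 x16 ne by blast
    show "has_induced_path 6 GV (insert {x, y} GE)"
    proof (rule chk_path[OF c])
      fix u v :: nat assume "u < 16" "v < 16"
      thus "{u, v} \<in> insert {x, y} GE \<longleftrightarrow> Radd x y u v"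
        by (auto simp: memGE Radd_def doubleton_eq_iff)
    qed
  qed
qed

end
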